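(* For every integer $r \geq 2$, \[n(r,3,3) = \begin{cases} r + r/2 & \text{if } r \text{ is even;}\\ r + \lceil r/2\rceil + 1 & \text{if } r \text{ is odd and } \lceil r/2\rceil \text{ is even;}\\ r + \lceil r/2\rceil + 2 & \text{if } r \text{ is odd and } \lceil r/2\rceil \text{ is odd.}\end{cases}\]
   Context: All graphs are finite and simple. For integers $r\geq 2$, $g\geq 3$, $\chi\geq 2$, an $(r,g,\chi)$-graph is an $r$-regular graph with girth (length of a shortest cycle) exactly $g$ and chromatic number exactly $\chi$. An $(r,g,\chi)$-cage is an $(r,g,\chi)$-graph of minimum order, and $n(r,g,\chi)$ denotes the order of an $(r,g,\chi)$-cage, i.e. the minimum number of vertices of an $(r,g,\chi)$-graph. *)

theory Defs
  imports Main
begin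

definition simple_graph :: "'a set \<Rightarrow> ('a \<Rightarrow> 'a \<Rightarrow> bool) \<Rightarrow> bool" where
  "simple_graph V E \<longleftrightarrow> finite V \<and>
     (\<forall>x y. E x y \<longrightarrow> x \<in> V \<and> y \<in> V) \<and>
     (\<forall>x y. E x y \<longrightarrow> E y x) \<and> (\<forall>x. \<not> E x x)"

definition regular :: "'a set \<Rightarrow> ('a \<Rightarrow> 'a \<Rightarrow> bool) \<Rightarrow> nat \<Rightarrow> bool" where
  "regular V E r \<longleftrightarrow> (\<forall>v\<in>V. card {u\<in>V. E v u} = r)"

definition has_cycle :: "'a set \<Rightarrow> ('a \<Rightarrow> 'a \<Rightarrow> bool) \<Rightarrow> nat \<Rightarrow> bool" where
  "has_cycle V E k \<longleftrightarrow> k \<ge> 3 \<and> (\<exists>c. inj_on c {0..<k} \<and> c ` {0..<k} \<subseteq> V \<and>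
     (\<forall>i<k. E (c i) (c (Suc i mod k))))"

definition girth_eq :: "'a set \<Rightarrow> ('a \<Rightarrow> 'a \<Rightarrow> bool) \<Rightarrow> nat \<Rightarrow> bool" where
  "girth_eq V E g \<longleftrightarrow> has_cycle V E g \<and> (\<forall>k<g. \<not> has_cycle V E k)"

definition colorable :: "'a set \<Rightarrow> ('a \<Rightarrow> 'a \<Rightarrow> bool) \<Rightarrow> nat \<Rightarrow> bool" where
  "colorable V E k \<longleftrightarrow> (\<exists>f. f ` V \<subseteq> {0..<k} \<and>
     (\<forall>x\<in>V. \<forall>y\<in>V. E x y \<longrightarrow> f x \<noteq> (f y :: nat)))"

definition chromatic_number :: "'a set \<Rightarrow> ('a \<Rightarrow> 'a \<Rightarrow> bool) \<Rightarrow> nat" where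
  "chromatic_number V E = (LEAST k. colorable V E k)"

text \<open>(r,g,chi)-graph; vertices taken from nat, which is no loss since every
  finite graph is isomorphic to one on a set of naturals.\<close>
definition rgchi_graph :: "nat set \<Rightarrow> (nat \<Rightarrow> nat \<Rightarrow> bool) \<Rightarrow> nat \<Rightarrow> nat \<Rightarrow> nat \<Rightarrow> bool" where
  "rgchi_graph V E r g chi \<longleftrightarrow> simple_graph V E \<and> regular V E r \<and> girth_eq V E g
     \<and> chromatic_number V E = chi"

definition cage_order :: "nat \<Rightarrow> nat \<Rightarrow> nat \<Rightarrow> nat" where
  "cage_order r g chi = (LEAST n. \<exists>V E. rgchi_graph V E r g chi \<and> card V = n)"

end

theory Submission
  imports Defs
begin

lemma colorable_card:
  assumes "simple_graph V E" shows "colorable V E (card V)"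
proof -
  from assms have fin: "finite V" by (simp add: simple_graph_def)
  obtain h where h: "bij_betw h V {0..<card V}" using ex_bij_betw_finite_nat[OF fin] by blast
  have "h ` V \<subseteq> {0..<card V}" using h by (simp add: bij_betw_def)
  moreover have "\<forall>x\<in>V. \<forall>y\<in>V. E x y \<longrightarrow> h x \<noteq> h y"
    using h assms unfolding bij_betw_def inj_on_def simple_graph_def by metis
  ultimately show ?thesis unfolding colorable_def by blast
qed

lemma chi_colorable:
  assumes "simple_graph V E" "chromatic_number V E = k" shows "colorable V E k"
  using LeastI[of "colorable V E", OF colorable_card[OF assms(1)]] assms(2)
  by (simp add: chromatic_number_def)

lemma handshake:
  fixes V :: "nat set"
  assumes "simple_graph V E" "regular V E r"
  shows "even (r * card V)"
proof -
  have fin: "finite V" using assms by (simp add: simple_graph_def)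
  define S where "S = (SIGMA v:V. {u\<in>V. E v u})"
  have cS: "card S = r * card V"
    unfolding S_def using fin assms(2) by (simp add: regular_def)
  define S1 where "S1 = {p\<in>S. fst p < snd p}"
  define S2 where "S2 = {p\<in>S. snd p < fst p}"
  have finS: "finite S" unfolding S_def using fin by simp
  have un: "S = S1 \<union> S2" unfolding S1_def S2_def S_def
    using assms(1) unfolding simple_graph_def by (auto, metis linorder_neqE_nat)
  have dis: "S1 \<inter> S2 = {}" unfolding S1_def S2_def by auto
  have sw: "S2 = prod.swap ` S1" unfolding S1_def S2_def S_def
    using assms(1) unfolding simple_graph_def by force
  have "card S2 = card S1" unfolding sw by (simp add: card_image)
  moreover have "card S = card S1 + card S2"
    using un dis finS by (metis card_Un_disjoint finite_Un)
  ultimately show ?thesis using cS by simp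
qed

lemma key:
  assumes sg: "simple_graph V E" and reg: "regular V E r"
    and pr: "\<forall>x\<in>V. \<forall>y\<in>V. E x y \<longrightarrow> f x \<noteq> (f y :: nat)"
    and cX: "card {u\<in>V. f u = a} = card V - r" and cY: "card {u\<in>V. f u = b} = card V - r"
    and ab: "a \<noteq> b" and z: "z \<in> V" "f z \<noteq> a" "f z \<noteq> b"
    and big: "2 * (card V - r) > r"
  shows False
proof -
  have fin: "finite V" using sg by (simp add: simple_graph_def)
  have full: "E x y" if "x \<in> V" "y \<in> V" "f x = c" "f y \<noteq> c" "card {u\<in>V. f u = c} = card V - r" for x y c
  proof -
    have sub: "{u\<in>V. E x u} \<subseteq> V - {u\<in>V. f u = c}" using pr that by blast
    have c1: "card {u\<in>V. E x u} = r" using reg that by (simp add: regular_def)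
    have "card (V - {u\<in>V. f u = c}) = card V - card {u\<in>V. f u = c}"
      using fin by (intro card_Diff_subset) auto
    also have "\<dots> = r" using that(5) 
      by (metis (no_types, lifting) c1 card_mono diff_diff_cancel fin finite_Diff sub card_Diff_subset mem_Collect_eq subsetI)
    finally have "{u\<in>V. E x u} = V - {u\<in>V. f u = c}"
      using sub c1 fin by (metis card_subset_eq finite_Diff)
    thus ?thesis using that by auto
  qed
  have "{u\<in>V. f u = a} \<union> {u\<in>V. f u = b} \<subseteq> {u\<in>V. E z u}"
  proof
    fix x assume "x \<in> {u\<in>V. f u = a} \<union> {u\<in>V. f u = b}"
    then consider "x \<in> V" "f x = a" | "x \<in> V" "f x = b" by auto
    then show "x \<in> {u\<in>V. E z u}"
    proof cases
      case 1 then have "E x z" using full[of x z a] z cX by auto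
      then show ?thesis using sg z unfolding simple_graph_def by auto
    next
      case 2 then have "E x z" using full[of x z b] z cY by auto
      then show ?thesis using sg z unfolding simple_graph_def by auto
    qed
  qed
  hence "card ({u\<in>V. f u = a} \<union> {u\<in>V. f u = b}) \<le> card {u\<in>V. E z u}"
    using fin by (intro card_mono) auto
  moreover have "card ({u\<in>V. f u = a} \<union> {u\<in>V. f u = b}) = 2 * (card V - r)"
    using fin ab cX cY by (subst card_Un_disjoint) auto
  moreover have "card {u\<in>V. E z u} = r" using reg z by (simp add: regular_def)
  ultimately show False using big by simp
qed

lemma arith3:
  fixes a b c m :: nat
  assumes "a \<le> m" "b \<le> m" "c \<le> m" "a + b + c = 3*m - 1" "m \<ge> 3"
  shows "(a = m \<and> b = m \<and> c \<ge> 1) \<or> (a = m \<and> c = m \<and> b \<ge> 1) \<or> (b = m \<and> c = m \<and> a \<ge> 1)"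
proof (cases "a < m")
  case True
  then have "b = m" "c = m" using assms by linarith+
  then have "a \<ge> 1" using assms by linarith
  then show ?thesis using \<open>b = m\<close> \<open>c = m\<close> by simp
next
  case False
  then have "a = m" using assms by simp
  show ?thesis
  proof (cases "b < m")
    case True
    then have "c = m" using assms \<open>a = m\<close> by linarith
    then have "b \<ge> 1" using assms \<open>a = m\<close> by linarith
    then show ?thesis using \<open>c = m\<close> \<open>a = m\<close> by simp
  next
    case False
    then have "b = m" using assms by simp
    then have "c \<ge> 1" using assms \<open>a = m\<close> by linarith
    then show ?thesis using \<open>b = m\<close> \<open>a = m\<close> by simp
  qed
qed

lemma fin_arith:
  fixes n r :: nat
  assumes A: "2 * n \<ge> 3 * r" "odd r \<longrightarrow> even n"
     "\<not> (odd r \<and> odd ((r+1) div 2) \<and> n = r + (r + 1) div 2)"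
  shows "n \<ge> (if even r then r + r div 2
     else if even ((r + 1) div 2) then r + (r + 1) div 2 + 1
     else r + (r + 1) div 2 + 2)"
proof (cases "even r")
  case True
  then show ?thesis using A(1) by (auto elim!: evenE)
next
  case False
  then obtain m where m: "r = 2*m+1" by (auto elim!: oddE)
  then have rd: "(r+1) div 2 = m+1" by simp
  have en: "even n" using A(2) False by simp
  then obtain k where k: "n = 2*k" by (auto elim!: evenE)
  show ?thesis
  proof (cases "even (m+1)")
    case True
    then obtain t where t: "m + 1 = 2*t" by (metis evenE)
    have "4*k + 3 \<ge> 12*t" using A(1) m k t by simp
    then have "k \<ge> 3*t" by linarith
    then show ?thesis using m k rd False True t by simp
  next
    case F2: False
    then obtain t where t: "m + 1 = 2*t+1" by (metis oddE)
    have "n \<noteq> r + (m+1)" using A(3) False F2 rd by simp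
    have m2: "m = 2*t" using t by simp
    have "4*k \<ge> 12*t+3" using A(1) m k m2 by simp
    then have "k \<ge> 3*t+1" by linarith
    moreover have "k \<noteq> 3*t+1" using \<open>n \<noteq> r + (m+1)\<close> m k m2 by simp
    ultimately have "k \<ge> 3*t+2" by simp
    then show ?thesis using m k rd False F2 m2 by simp
  qed
qed

lemma lower:
  fixes V :: "nat set"
  assumes G: "rgchi_graph V E r 3 3" and r2: "r \<ge> 2"
  shows "card V \<ge> (if even r then r + r div 2
     else if even ((r + 1) div 2) then r + (r + 1) div 2 + 1
     else r + (r + 1) div 2 + 2)"
proof -
  have sg: "simple_graph V E" and reg: "regular V E r" and cyc: "has_cycle V E 3"
    and chi: "chromatic_number V E = 3"
    using G by (auto simp: rgchi_graph_def girth_eq_def)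
  have fin: "finite V" using sg by (simp add: simple_graph_def)
  obtain c where c: "c ` {0..<3::nat} \<subseteq> V" using cyc unfolding has_cycle_def by blast
  have c0: "c 0 \<in> V" using c by auto
  obtain f where fV: "f ` V \<subseteq> {0..<3}" and pr: "\<forall>x\<in>V. \<forall>y\<in>V. E x y \<longrightarrow> f x \<noteq> (f y :: nat)"
    using chi_colorable[OF sg chi] unfolding colorable_def by blast
  define n where "n = card V"
  have Nsub: "{u\<in>V. E v u} \<subseteq> V - {u\<in>V. f u = f v}" if "v \<in> V" for v
  proof
    fix u assume "u \<in> {u\<in>V. E v u}"
    then have "u \<in> V" "E v u" by auto
    then have "f v \<noteq> f u" using pr that by blast
    then show "u \<in> V - {u\<in>V. f u = f v}" using \<open>u \<in> V\<close> by auto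
  qed
  have degv: "card {u\<in>V. E v u} = r" if "v \<in> V" for v using reg that by (simp add: regular_def)
  have rn: "r + 1 \<le> n"
  proof -
    have "{u\<in>V. E (c 0) u} \<subseteq> V - {c 0}" using sg unfolding simple_graph_def by auto
    hence "r \<le> card (V - {c 0})" using degv[OF c0] fin by (metis card_mono finite_Diff)
    moreover have "card (V - {c 0}) = n - 1" using c0 fin n_def by simp
    moreover have "n \<ge> 1" using c0 fin n_def by (metis One_nat_def Suc_leI card_gt_0_iff empty_iff)
    ultimately show ?thesis by simp
  qed
  have cls: "card {u\<in>V. f u = i} \<le> n - r" for i
  proof (cases "\<exists>v\<in>V. f v = i")
    case True
    then obtain v where v: "v \<in> V" "f v = i" by blast
    have "r \<le> card (V - {u\<in>V. f u = i})" using Nsub[OF v(1)] degv[OF v(1)] v fin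
      by (metis card_mono finite_Diff)
    moreover have "card (V - {u\<in>V. f u = i}) = n - card {u\<in>V. f u = i}"
      unfolding n_def using fin by (intro card_Diff_subset) auto
    moreover have "card {u\<in>V. f u = i} \<le> n" unfolding n_def using fin by (intro card_mono) auto
    ultimately show ?thesis by linarith
  next
    case False
    then have "{u\<in>V. f u = i} = {}" by auto
    then show ?thesis by (metis card.empty le0)
  qed
  have split: "V = {u\<in>V. f u = 0} \<union> {u\<in>V. f u = 1} \<union> {u\<in>V. f u = 2}"
    using fV by force
  have nsum: "n = card {u\<in>V. f u = 0} + card {u\<in>V. f u = 1} + card {u\<in>V. f u = 2}"
    unfolding n_def
    apply (subst split)
    using fin by (subst card_Un_disjoint; auto)+
  have par: "odd r \<Longrightarrow> even n" using handshake[OF sg reg] n_def by simp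
  have noteq: False if odd: "odd r" "odd ((r+1) div 2)" and neq: "n = r + (r + 1) div 2"
  proof -
    define m where "m = (r+1) div 2"
    obtain a where a: "r = 2*a+1" using odd(1) by (metis oddE)
    have ma: "m = a + 1" unfolding m_def a by simp
    have "odd m" using odd(2) m_def by simp
    moreover have "m \<ge> 2" using a r2 ma by simp
    ultimately have "m \<ge> 3" by (metis One_nat_def Suc_1 dvd_refl eval_nat_numeral(3) le_antisym not_less_eq_eq)
    then have rm: "r = 2*m - 1" "m \<ge> 3" "n - r = m" using a ma neq m_def by auto
    let ?a = "card {u\<in>V. f u = 0}" and ?b = "card {u\<in>V. f u = 1}" and ?c = "card {u\<in>V. f u = 2}"
    have le: "?a \<le> m" "?b \<le> m" "?c \<le> m" using cls rm by auto
    have sum: "?a + ?b + ?c = 3*m - 1" using nsum rm neq by simp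
    have cardeq: "m = card V - r" using rm n_def by simp
    have big: "2 * (card V - r) > r" using rm n_def by simp
    have ne: "{u\<in>V. f u = i} \<noteq> {}" if "card {u\<in>V. f u = i} \<ge> 1" for i
      using that by (metis card.empty not_one_le_zero)
    consider "?a = m" "?b = m" "?c \<ge> 1" | "?a = m" "?c = m" "?b \<ge> 1" | "?b = m" "?c = m" "?a \<ge> 1"
      using arith3[OF le sum rm(2)] by blast
    then show False
    proof cases
      case 1
      obtain z where z: "z \<in> V" "f z = 2" using ne[of 2] 1 by auto
      have e1: "card {u\<in>V. f u = 0} = card V - r" using 1 cardeq by simp
      have e2: "card {u\<in>V. f u = 1} = card V - r" using 1 cardeq by simp
      show False using key[OF sg reg pr e1 e2 _ z(1) _ _ big] z(2) by simp
    next
      case 2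
      obtain z where z: "z \<in> V" "f z = 1" using ne[of 1] 2 by auto
      have e1: "card {u\<in>V. f u = 0} = card V - r" using 2 cardeq by simp
      have e2: "card {u\<in>V. f u = 2} = card V - r" using 2 cardeq by simp
      show False using key[OF sg reg pr e1 e2 _ z(1) _ _ big] z(2) by simp
    next
      case 3
      obtain z where z: "z \<in> V" "f z = 0" using ne[of 0] 3 by auto
      have e1: "card {u\<in>V. f u = 1} = card V - r" using 3 cardeq by simp
      have e2: "card {u\<in>V. f u = 2} = card V - r" using 3 cardeq by simp
      show False using key[OF sg reg pr e1 e2 _ z(1) _ _ big] z(2) by simp
    qed
  qed
  have "3 * (n - r) \<ge> n" using cls[of 0] cls[of 1] cls[of 2] nsum by linarith
  moreover have "odd r \<longrightarrow> even n" using par by blast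
  moreover have "\<not> (odd r \<and> odd ((r+1) div 2) \<and> n = r + (r + 1) div 2)" using noteq by blast
  ultimately have A: "2 * n \<ge> 3 * r" "odd r \<longrightarrow> even n"
     "\<not> (odd r \<and> odd ((r+1) div 2) \<and> n = r + (r + 1) div 2)" using rn by auto
  have "n \<ge> (if even r then r + r div 2
     else if even ((r + 1) div 2) then r + (r + 1) div 2 + 1
     else r + (r + 1) div 2 + 2)" using fin_arith[OF A] .
  then show ?thesis using n_def by simp
qed

definition GG :: "nat \<Rightarrow> (nat \<Rightarrow> nat) \<Rightarrow> (nat \<Rightarrow> nat) \<Rightarrow> nat \<Rightarrow> nat \<Rightarrow> bool" where
  "GG n p q x y \<longleftrightarrow> x < n \<and> y < n \<and> x mod 3 \<noteq> y mod 3 \<and> y \<noteq> p x \<and> y \<noteq> q x"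

lemma construct:
  assumes inv: "\<forall>x<n. p x < n \<and> q x < n \<and> p (p x) = x \<and> q (q x) = x"
    and deg: "\<forall>x<n. card {u. u < n \<and> u mod 3 \<noteq> x mod 3 \<and> u \<noteq> p x \<and> u \<noteq> q x} = r"
    and tri: "GG n p q a b" "GG n p q b c" "GG n p q c a"
  shows "rgchi_graph {0..<n} (GG n p q) r 3 3"
proof -
  let ?E = "GG n p q"
  have sg: "simple_graph {0..<n} ?E"
    unfolding simple_graph_def
  proof (intro conjI allI impI)
    fix x y assume "?E x y"
    then show "?E y x" using inv unfolding GG_def by metis
  qed (auto simp: GG_def)
  have reg: "regular {0..<n} ?E r"
    unfolding regular_def
  proof
    fix v assume "v \<in> {0..<n}"
    then have "{u \<in> {0..<n}. ?E v u} = {u. u < n \<and> u mod 3 \<noteq> v mod 3 \<and> u \<noteq> p v \<and> u \<noteq> q v}"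
      by (auto simp: GG_def)
    then show "card {u \<in> {0..<n}. ?E v u} = r" using deg \<open>v \<in> {0..<n}\<close> by simp
  qed
  define cc where "cc = (\<lambda>i::nat. if i = 0 then a else if i = 1 then b else c)"
  have abc: "a \<noteq> b" "b \<noteq> c" "c \<noteq> a" "a < n" "b < n" "c < n" using tri by (auto simp: GG_def)
  have cyc: "has_cycle {0..<n} ?E 3"
    unfolding has_cycle_def
  proof (intro conjI exI[of _ cc])
    show "inj_on cc {0..<3}" unfolding inj_on_def cc_def using abc by auto
    show "cc ` {0..<3} \<subseteq> {0..<n}" unfolding cc_def using abc by auto
    show "\<forall>i<3. ?E (cc i) (cc (Suc i mod 3))"
    proof (intro allI impI)
      fix i :: nat assume "i < 3"
      then have "i = 0 \<or> i = 1 \<or> i = 2" by auto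
      then show "?E (cc i) (cc (Suc i mod 3))" using tri unfolding cc_def by auto
    qed
  qed simp
  have gir: "girth_eq {0..<n} ?E 3" using cyc by (simp add: girth_eq_def has_cycle_def)
  have col3: "colorable {0..<n} ?E 3"
    unfolding colorable_def by (intro exI[of _ "\<lambda>x. x mod 3"]) (auto simp: GG_def)
  have notcol: "\<not> colorable {0..<n} ?E k" if "k < 3" for k
  proof
    assume "colorable {0..<n} ?E k"
    then obtain f where f: "f ` {0..<n} \<subseteq> {0..<k}" "\<forall>x\<in>{0..<n}. \<forall>y\<in>{0..<n}. ?E x y \<longrightarrow> f x \<noteq> (f y :: nat)"
      unfolding colorable_def by blast
    have "f a < k" "f b < k" "f c < k" using f(1) abc by (auto simp: image_subset_iff)
    moreover have "f a \<noteq> f b" "f b \<noteq> f c" "f c \<noteq> f a" using f(2) tri abc by auto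
    ultimately show False using that by linarith
  qed
  have "chromatic_number {0..<n} ?E = 3"
    unfolding chromatic_number_def
  proof (rule Least_equality)
    show "colorable {0..<n} ?E 3" by (rule col3)
    fix k assume "colorable {0..<n} ?E k" then show "3 \<le> k" using notcol by (meson not_le)
  qed
  then show ?thesis using sg reg gir by (simp add: rgchi_graph_def)
qed

lemma cnt_Suc: "card {u. u < Suc N \<and> P u} = card {u. u < N \<and> P u} + (if P N then 1 else 0)"
proof -
  have "{u. u < Suc N \<and> P u} = {u. u < N \<and> P u} \<union> (if P N then {N} else {})" by (auto simp: less_Suc_eq)
  then show ?thesis by (simp add: card_Un_disjoint)
qed

lemma cnt3: "i < 3 \<Longrightarrow> card {u. u < 3*m \<and> u mod 3 \<noteq> i} = 2*m"
proof (induction m)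
  case 0 then show ?case by simp
next
  case (Suc m)
  have e: "3 * Suc m = Suc (Suc (Suc (3*m)))" by simp
  show ?case unfolding e cnt_Suc using Suc by auto presburger+
qed

lemma cnt3b: "i < 3 \<Longrightarrow> card {u. u < 3*m+1 \<and> u mod 3 \<noteq> i} = 2*m + (if i = 0 then 0 else 1)"
proof -
  assume "i < 3"
  have "card {u. u < Suc (3*m) \<and> u mod 3 \<noteq> i} = 2*m + (if i = 0 then 0 else 1)"
    unfolding cnt_Suc using cnt3[OF \<open>i<3\<close>] by simp
  then show ?thesis by simp
qed

definition enc :: "nat \<Rightarrow> nat \<Rightarrow> nat" where "enc i j = 3*j + i"

lemma enc_mod[simp]: "i < 3 \<Longrightarrow> enc i j mod 3 = i" by (simp add: enc_def)
lemma enc_div[simp]: "i < 3 \<Longrightarrow> enc i j div 3 = j" by (simp add: enc_def)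
lemma enc_dvd[simp]: "i < 3 \<Longrightarrow> 3 dvd enc i j \<longleftrightarrow> i = 0" 
  unfolding enc_def by presburger
lemma enc_lessS[simp]: "i < 3 \<Longrightarrow> enc i j < Suc (3*M) \<longleftrightarrow> (j < M \<or> (j = M \<and> i = 0))"
  unfolding enc_def by presburger
lemma enc_dec: "enc (x mod 3) (x div 3) = x" by (simp add: enc_def)
lemma enc_inj[simp]: "i < 3 \<Longrightarrow> i' < 3 \<Longrightarrow> enc i j = enc i' j' \<longleftrightarrow> i = i' \<and> j = j'"
  by (simp add: enc_def) presburger
lemma enc_less: "i < 3 \<Longrightarrow> s \<le> 3 \<Longrightarrow> enc i j < 3*m + s \<longleftrightarrow> (j < m \<or> (j = m \<and> i < s))"
  unfolding enc_def by presburger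

lemma dec_cases:
  assumes "\<And>i j. x = enc i j \<Longrightarrow> i = 0 \<or> i = 1 \<or> i = 2 \<Longrightarrow> P"
  shows P
proof -
  have "x mod 3 = 0 \<or> x mod 3 = 1 \<or> x mod 3 = 2" by auto
  then show P using assms[of "x mod 3" "x div 3"] enc_dec by metis
qed

definition p2 :: "nat \<Rightarrow> nat" where
  "p2 x = (if even (x div 3) then enc ((x mod 3 + 1) mod 3) (x div 3 + 1)
     else enc ((x mod 3 + 2) mod 3) (x div 3 - 1))"

lemma p2_props:
  assumes "x < 6*k"
  shows "p2 x < 6*k" "p2 (p2 x) = x" "p2 x mod 3 \<noteq> x mod 3"
proof -
  obtain i j where x: "x = enc i j" and i: "i = 0 \<or> i = 1 \<or> i = 2" using dec_cases by blast
  have jk: "j < 2*k" using assms i unfolding x enc_def by auto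
  have jk2: "even j \<Longrightarrow> j + 1 < 2*k" using jk by presburger
  show "p2 x < 6*k" "p2 (p2 x) = x" "p2 x mod 3 \<noteq> x mod 3"
    using i jk jk2 odd_pos[of j] unfolding x p2_def by (auto simp: enc_def)
qed

definition p3 :: "nat \<Rightarrow> nat \<Rightarrow> nat" where
  "p3 h x = (if x mod 3 = 0 then (if x div 3 < h then enc 1 (x div 3) else enc 2 (x div 3 - h))
     else if x mod 3 = 1 then (if x div 3 < h then enc 0 (x div 3) else enc 2 (x div 3))
     else (if x div 3 < h then enc 0 (x div 3 + h) else enc 1 (x div 3)))"

definition q3 :: "nat \<Rightarrow> nat \<Rightarrow> nat" where
  "q3 h x = (if x mod 3 = 0 then x
     else if x mod 3 = 1 then (if x div 3 + 1 < 2*h - 1 then enc 2 (x div 3 + 1) else enc 2 0)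
     else (if x div 3 \<ge> 1 then enc 1 (x div 3 - 1) else enc 1 (2*h - 2)))"

lemma pr0:
  assumes "x < 3*(2*h-1)+1" "h \<ge> 2"
  shows "p3 h x < 3*(2*h-1)+1"
proof -
  obtain i j where x: "x = enc i j" and i: "i = 0 \<or> i = 1 \<or> i = 2" using dec_cases by blast
  have jm: "if i = 0 then j \<le> 2*h-1 else j < 2*h-1" using assms(1) i enc_less[of i 1 j "2*h-1"] unfolding x
    by auto
  show ?thesis
    using i jm assms(2) unfolding x p3_def q3_def by (elim disjE) (auto simp: enc_less)
qed

lemma pr1:
  assumes "x < 3*(2*h-1)+1" "h \<ge> 2"
  shows "p3 h (p3 h x) = x"
proof -
  obtain i j where x: "x = enc i j" and i: "i = 0 \<or> i = 1 \<or> i = 2" using dec_cases by blast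
  have jm: "if i = 0 then j \<le> 2*h-1 else j < 2*h-1" using assms(1) i enc_less[of i 1 j "2*h-1"] unfolding x
    by auto
  show ?thesis
    using i jm assms(2) unfolding x p3_def q3_def by (elim disjE) (auto simp: enc_less)
qed

lemma pr2:
  assumes "x < 3*(2*h-1)+1" "h \<ge> 2"
  shows "p3 h x mod 3 \<noteq> x mod 3"
proof -
  obtain i j where x: "x = enc i j" and i: "i = 0 \<or> i = 1 \<or> i = 2" using dec_cases by blast
  have jm: "if i = 0 then j \<le> 2*h-1 else j < 2*h-1" using assms(1) i enc_less[of i 1 j "2*h-1"] unfolding x
    by auto
  show ?thesis
    using i jm assms(2) unfolding x p3_def q3_def by (elim disjE) (auto simp: enc_less)
qed

lemma pr3:
  assumes "x < 3*(2*h-1)+1" "h \<ge> 2"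
  shows "q3 h x < 3*(2*h-1)+1"
proof -
  obtain i j where x: "x = enc i j" and i: "i = 0 \<or> i = 1 \<or> i = 2" using dec_cases by blast
  have jm: "if i = 0 then j \<le> 2*h-1 else j < 2*h-1" using assms(1) i enc_less[of i 1 j "2*h-1"] unfolding x
    by auto
  show ?thesis
    using i jm assms(2) unfolding x p3_def q3_def by (elim disjE) (auto simp: enc_less)
qed

lemma pr4:
  assumes "x < 3*(2*h-1)+1" "h \<ge> 2"
  shows "q3 h (q3 h x) = x"
proof -
  obtain i j where x: "x = enc i j" and i: "i = 0 \<or> i = 1 \<or> i = 2" using dec_cases by blast
  have jm: "if i = 0 then j \<le> 2*h-1 else j < 2*h-1" using assms(1) i enc_less[of i 1 j "2*h-1"] unfolding x
    by auto
  show ?thesis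
    using i jm assms(2) unfolding x p3_def q3_def by (elim disjE) (auto simp: enc_less)
qed

lemma pr5:
  assumes "x < 3*(2*h-1)+1" "h \<ge> 2"
  shows "x mod 3 = 0 \<longrightarrow> q3 h x = x"
proof -
  obtain i j where x: "x = enc i j" and i: "i = 0 \<or> i = 1 \<or> i = 2" using dec_cases by blast
  have jm: "if i = 0 then j \<le> 2*h-1 else j < 2*h-1" using assms(1) i enc_less[of i 1 j "2*h-1"] unfolding x
    by auto
  show ?thesis
    using i jm assms(2) unfolding x p3_def q3_def by (elim disjE) (auto simp: enc_less)
qed

lemma pr6:
  assumes "x < 3*(2*h-1)+1" "h \<ge> 2"
  shows "x mod 3 \<noteq> 0 \<longrightarrow> q3 h x mod 3 \<noteq> x mod 3"
proof -
  obtain i j where x: "x = enc i j" and i: "i = 0 \<or> i = 1 \<or> i = 2" using dec_cases by blast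
  have jm: "if i = 0 then j \<le> 2*h-1 else j < 2*h-1" using assms(1) i enc_less[of i 1 j "2*h-1"] unfolding x
    by auto
  show ?thesis
    using i jm assms(2) unfolding x p3_def q3_def by (elim disjE) (auto simp: enc_less)
qed

lemma pr7:
  assumes "x < 3*(2*h-1)+1" "h \<ge> 2"
  shows "x mod 3 \<noteq> 0 \<longrightarrow> q3 h x \<noteq> p3 h x"
proof -
  obtain i j where x: "x = enc i j" and i: "i = 0 \<or> i = 1 \<or> i = 2" using dec_cases by blast
  have jm: "if i = 0 then j \<le> 2*h-1 else j < 2*h-1" using assms(1) i enc_less[of i 1 j "2*h-1"] unfolding x
    by auto
  show ?thesis
    using i jm assms(2) unfolding x p3_def q3_def by (elim disjE) (auto simp: enc_less)
qed


lemma card_rm1: "finite C \<Longrightarrow> a \<in> C \<Longrightarrow> card (C - {a}) = card C - 1"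
  by simp

lemma card_rm2: "finite C \<Longrightarrow> a \<in> C \<Longrightarrow> b \<in> C \<Longrightarrow> a \<noteq> b \<Longrightarrow> card (C - {a, b}) = card C - 2"
proof -
  assume "finite C" "a \<in> C" "b \<in> C" "a \<noteq> b"
  then have "C - {a, b} = (C - {a}) - {b}" by auto
  then show ?thesis using \<open>finite C\<close> \<open>a \<in> C\<close> \<open>b \<in> C\<close> \<open>a \<noteq> b\<close> by simp
qed

lemma con_even:
  assumes "m \<ge> 1"
  shows "rgchi_graph {0..<3*m} (GG (3*m) id id) (2*m) 3 3"
proof (rule construct)
  show "\<forall>x<3 * m. id x < 3 * m \<and> id x < 3 * m \<and> id (id x) = x \<and> id (id x) = x" by simp
  show "\<forall>x<3 * m. card {u. u < 3 * m \<and> u mod 3 \<noteq> x mod 3 \<and> u \<noteq> id x \<and> u \<noteq> id x} = 2 * m"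
  proof (intro allI impI)
    fix x assume "x < 3*m"
    have "{u. u < 3 * m \<and> u mod 3 \<noteq> x mod 3 \<and> u \<noteq> id x \<and> u \<noteq> id x} = {u. u < 3 * m \<and> u mod 3 \<noteq> x mod 3}"
      by auto
    then show "card {u. u < 3 * m \<and> u mod 3 \<noteq> x mod 3 \<and> u \<noteq> id x \<and> u \<noteq> id x} = 2 * m"
      using cnt3[of "x mod 3" m] by simp
  qed
  show "GG (3*m) id id 0 1" "GG (3*m) id id 1 2" "GG (3*m) id id 2 0" using assms by (auto simp: GG_def)
qed

lemma con_m_even:
  assumes "k \<ge> 1"
  shows "rgchi_graph {0..<6*k} (GG (6*k) p2 id) (4*k - 1) 3 3"
proof (rule construct)
  show "\<forall>x<6*k. p2 x < 6*k \<and> id x < 6*k \<and> p2 (p2 x) = x \<and> id (id x) = x" using p2_props by simp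
  show "\<forall>x<6*k. card {u. u < 6*k \<and> u mod 3 \<noteq> x mod 3 \<and> u \<noteq> p2 x \<and> u \<noteq> id x} = 4*k - 1"
  proof (intro allI impI)
    fix x assume x: "x < 6*k"
    let ?C = "{u. u < 3 * (2*k) \<and> u mod 3 \<noteq> x mod 3}"
    have "{u. u < 6*k \<and> u mod 3 \<noteq> x mod 3 \<and> u \<noteq> p2 x \<and> u \<noteq> id x} = ?C - {p2 x}"
      by auto
    moreover have "card ?C = 4*k" using cnt3[of "x mod 3" "2*k"] by simp
    moreover have "p2 x \<in> ?C" using p2_props[OF x] by simp
    ultimately show "card {u. u < 6*k \<and> u mod 3 \<noteq> x mod 3 \<and> u \<noteq> p2 x \<and> u \<noteq> id x} = 4*k - 1"
      by (simp add: card_rm1)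
  qed
  show "GG (6*k) p2 id 0 1" "GG (6*k) p2 id 1 2" "GG (6*k) p2 id 2 0" using assms
    by (auto simp: GG_def p2_def enc_def)
qed

lemma con_m_odd:
  assumes h: "h \<ge> 2"
  shows "rgchi_graph {0..<3*(2*h-1)+1} (GG (3*(2*h-1)+1) (p3 h) (q3 h)) (2*(2*h-1) - 1) 3 3"
proof (rule construct)
  let ?n = "3*(2*h-1)+1"
  show "\<forall>x<?n. p3 h x < ?n \<and> q3 h x < ?n \<and> p3 h (p3 h x) = x \<and> q3 h (q3 h x) = x"
    using pr0 pr1 pr3 pr4 h by blast
  show "\<forall>x<?n. card {u. u < ?n \<and> u mod 3 \<noteq> x mod 3 \<and> u \<noteq> p3 h x \<and> u \<noteq> q3 h x} = 2*(2*h-1) - 1"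
  proof (intro allI impI)
    fix x assume x: "x < ?n"
    let ?C = "{u. u < 3 * (2*h-1) + 1 \<and> u mod 3 \<noteq> x mod 3}"
    have eq: "{u. u < ?n \<and> u mod 3 \<noteq> x mod 3 \<and> u \<noteq> p3 h x \<and> u \<noteq> q3 h x} = ?C - {p3 h x, q3 h x}"
      by auto
    have cC: "card ?C = 2*(2*h-1) + (if x mod 3 = 0 then 0 else 1)" using cnt3b[of "x mod 3" "2*h-1"] by simp
    have pC: "p3 h x \<in> ?C" using pr0[OF x h] pr2[OF x h] by simp
    show "card {u. u < ?n \<and> u mod 3 \<noteq> x mod 3 \<and> u \<noteq> p3 h x \<and> u \<noteq> q3 h x} = 2*(2*h-1) - 1"
    proof (cases "x mod 3 = 0")
      case True
      then have "q3 h x = x" using pr5[OF x h] by simp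
      then have "?C - {p3 h x, q3 h x} = ?C - {p3 h x}" by auto
      then show ?thesis using eq cC pC True by (simp add: card_rm1)
    next
      case False
      have qC: "q3 h x \<in> ?C" using pr3[OF x h] pr6[OF x h] False by simp
      have "p3 h x \<noteq> q3 h x" using pr7[OF x h] False by simp
      then show ?thesis using eq cC pC qC False by (simp add: card_rm2)
    qed
  qed
  show "GG ?n (p3 h) (q3 h) 0 4" "GG ?n (p3 h) (q3 h) 4 2" "GG ?n (p3 h) (q3 h) 2 0" using assms
    by (auto simp: GG_def p3_def q3_def enc_def)
qed

theorem theorem3p2:
  fixes r :: nat
  assumes "r \<ge> 2"
  shows "cage_order r 3 3 =
    (if even r then r + r div 2
     else if even ((r + 1) div 2) then r + (r + 1) div 2 + 1
     else r + (r + 1) div 2 + 2)"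
proof -
  let ?F = "(if even r then r + r div 2
     else if even ((r + 1) div 2) then r + (r + 1) div 2 + 1
     else r + (r + 1) div 2 + 2)"
  have ex: "\<exists>V E. rgchi_graph V E r 3 3 \<and> card V = ?F"
  proof (cases "even r")
    case True
    then obtain m where m: "r = 2*m" by (metis evenE)
    then have "m \<ge> 1" using assms by simp
    from con_even[OF this] show ?thesis using m True by (intro exI[of _ "{0..<3*m}"] exI) auto
  next
    case False
    define mm where "mm = (r+1) div 2"
    obtain a where a: "r = 2*a+1" using False by (metis oddE)
    have mma: "mm = a + 1" unfolding mm_def a by simp
    show ?thesis
    proof (cases "even mm")
      case True
      then obtain k where k: "mm = 2*k" by (metis evenE)
      have k1: "k \<ge> 1" using k mma by simp
      have r4: "r = 4*k - 1" using a mma k by simp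
      have F: "?F = 6*k" using False True r4 k mm_def k1 by simp
      show ?thesis using con_m_even[OF k1] F r4 by (intro exI[of _ "{0..<6*k}"] exI) auto
    next
      case F2: False
      then obtain t where t: "mm = 2*t+1" by (metis oddE)
      have h2: "t + 1 \<ge> 2" using t mma a assms by simp
      have r4: "r = 2*(2*(t+1)-1) - 1" using a mma t by simp
      have F: "?F = 3*(2*(t+1)-1)+1" using False F2 r4 t mm_def by simp
      show ?thesis using con_m_odd[OF h2] F r4 by (intro exI[of _ "{0..<3*(2*(t+1)-1)+1}"] exI) auto
    qed
  qed
  show ?thesis
    unfolding cage_order_def
  proof (rule Least_equality)
    show "\<exists>V E. rgchi_graph V E r 3 3 \<and> card V = ?F" by (rule ex)
    fix n assume "\<exists>V E. rgchi_graph V E r 3 3 \<and> card V = n"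
    then obtain V E where "rgchi_graph V E r 3 3" "card V = n" by blast
    then show "?F \<le> n" using lower[OF _ assms] by blast
  qed
qed

end
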